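(* Let $\mathcal{S}$ be a set of states, $\mathcal{E}$ a set of events, and $\rightarrow$ a small-step transition relation $s \xrightarrow{t} s'$ on $\mathcal{S}$ labelled by finite traces $t \in \mathcal{E}^*$. Let $s \in \mathcal{S}$, let $\tau$ be a general trace (a finite or infinite sequence of events), and suppose there exists $n \in \mathbb{N}_0$ with $\mathrm{Forever}(s, \tau, n)$. Then: (1) if $\tau$ is finite, then $\mathrm{ForeverFinite}(\tau, s)$; (2) if $\tau$ is infinite, then $\mathrm{Reacts}(\tau, s)$. Moreover, if $\rightarrow$ is determinate, the converse also holds: for finite $\tau$, $\mathrm{ForeverFinite}(\tau, s)$ implies that there is an $n\in\mathbb{N}_0$ with $\mathrm{Forever}(s,\tau,n)$; and for infinite $\tau$, $\mathrm{Reacts}(\tau, s)$ implies that there is an $n\in\mathbb{N}_0$ with $\mathrm{Forever}(s,\tau,n)$.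
   Context: Traces: $\varepsilon$ denotes the empty trace and $t\cdot\tau$ denotes concatenation of a finite trace $t$ with a finite or infinite trace $\tau$. For finite traces, $s \xrightarrow{t}{}^{*} s'$ denotes the reflexive–transitive closure of the step relation: $s \xrightarrow{\varepsilon}{}^{*} s$, and if $s \xrightarrow{t_1} s_1$ and $s_1 \xrightarrow{t_2}{}^{*} s'$ then $s \xrightarrow{t_1\cdot t_2}{}^{*} s'$. The following predicates are defined coinductively (as greatest fixed points of the given rules): - Silent divergence $\mathrm{DivSilent}(s)$: if $s \xrightarrow{\varepsilon} s'$ and $\mathrm{DivSilent}(s')$ then $\mathrm{DivSilent}(s)$. - (Inductive, no recursion) Finite-trace divergence $\mathrm{ForeverFinite}(t, s)$ for finite $t$: holds iff there is $s'$ with $s \xrightarrow{t}{}^{*} s'$ and $\mathrm{DivSilent}(s')$. - Reactive divergence $\mathrm{Reacts}(\omega, s)$ for infinite $\omega$: if $s \xrightarrow{t}{}^{*} s'$, $t \neq \varepsilon$, and $\mathrm{Reacts}(\omega, s')$, then $\mathrm{Reacts}(t\cdot\omega, s)$. - General-trace divergence $\mathrm{Forever}(s, \tau, n)$ for a general (finite or infinite) trace $\tau$ and $n \in \mathbb{N}_0$: if $s \xrightarrow{t} s'$, $\mathrm{Forever}(s', \tau, m)$ for some $m\in\mathbb{N}_0$, and $\mathrm{guard}(\tau, n, t, m)$, then $\mathrm{Forever}(s, t\cdot\tau, n)$, where $\mathrm{guard}(\tau,n,t,m)$ means: $\tau = \varepsilon$, or ($t = \varepsilon$ implies $m < n$).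 Determinacy (in the sense of CompCert): the step relation is determinate if every single step $s \xrightarrow{t} s'$ has a trace $t$ of length at most one, and whenever $s \xrightarrow{t_1} s_1$ and $s \xrightarrow{t_2} s_2$ from the same state $s$, then $t_1$ and $t_2$ match (in particular $t_1 = \varepsilon$ iff $t_2 = \varepsilon$), and $t_1 = t_2$ implies $s_1 = s_2$. *)

theory Defs
  imports Main "HOL-Library.Stream"
begin

datatype 'e gtrace = Fin "'e list" | Inf "'e stream"

fun gconcat :: "'e list \<Rightarrow> 'e gtrace \<Rightarrow> 'e gtrace" where
  "gconcat t (Fin u) = Fin (t @ u)"
| "gconcat t (Inf w) = Inf (t @- w)"

inductive star :: "('s \<Rightarrow> 'e list \<Rightarrow> 's \<Rightarrow> bool) \<Rightarrow> 's \<Rightarrow> 'e list \<Rightarrow> 's \<Rightarrow> bool"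
  for step where
  star_refl: "star step s [] s"
| star_step: "step s t1 s1 \<Longrightarrow> star step s1 t2 s' \<Longrightarrow> star step s (t1 @ t2) s'"

coinductive DivSilent :: "('s \<Rightarrow> 'e list \<Rightarrow> 's \<Rightarrow> bool) \<Rightarrow> 's \<Rightarrow> bool"
  for step where
  "step s [] s' \<Longrightarrow> DivSilent step s' \<Longrightarrow> DivSilent step s"

definition ForeverFinite :: "('s \<Rightarrow> 'e list \<Rightarrow> 's \<Rightarrow> bool) \<Rightarrow> 'e list \<Rightarrow> 's \<Rightarrow> bool" where
  "ForeverFinite step t s \<longleftrightarrow> (\<exists>s'. star step s t s' \<and> DivSilent step s')"

coinductive Reacts :: "('s \<Rightarrow> 'e list \<Rightarrow> 's \<Rightarrow> bool) \<Rightarrow> 'e stream \<Rightarrow> 's \<Rightarrow> bool"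
  for step where
  "star step s t s' \<Longrightarrow> t \<noteq> [] \<Longrightarrow> Reacts step \<omega> s' \<Longrightarrow> Reacts step (t @- \<omega>) s"

definition guard :: "'e gtrace \<Rightarrow> nat \<Rightarrow> 'e list \<Rightarrow> nat \<Rightarrow> bool" where
  "guard \<tau> n t m \<longleftrightarrow> \<tau> = Fin [] \<or> (t = [] \<longrightarrow> m < n)"

coinductive Forever :: "('s \<Rightarrow> 'e list \<Rightarrow> 's \<Rightarrow> bool) \<Rightarrow> 's \<Rightarrow> 'e gtrace \<Rightarrow> nat \<Rightarrow> bool"
  for step where
  "step s t s' \<Longrightarrow> Forever step s' \<tau> m \<Longrightarrow> guard \<tau> n t m \<Longrightarrow> Forever step s (gconcat t \<tau>) n"

text \<open>Determinacy (CompCert style). Matching of traces is rendered by its stated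
consequence: both empty or both nonempty.\<close>
definition determinate :: "('s \<Rightarrow> 'e list \<Rightarrow> 's \<Rightarrow> bool) \<Rightarrow> bool" where
  "determinate step \<longleftrightarrow>
     (\<forall>s t s'. step s t s' \<longrightarrow> length t \<le> 1) \<and>
     (\<forall>s t1 s1 t2 s2. step s t1 s1 \<longrightarrow> step s t2 s2 \<longrightarrow>
        (t1 = [] \<longleftrightarrow> t2 = []) \<and> (t1 = t2 \<longrightarrow> s1 = s2))"

end

theory Submission
  imports Defs
begin

inductive starn :: "('s \<Rightarrow> 'e list \<Rightarrow> 's \<Rightarrow> bool) \<Rightarrow> 's \<Rightarrow> 'e list \<Rightarrow> 's \<Rightarrow> nat \<Rightarrow> bool"
  for step where
  starn_refl: "starn step s [] s 0"
| starn_step: "step s t1 s1 \<Longrightarrow> starn step s1 t2 s' k \<Longrightarrow> starn step s (t1 @ t2) s' (Suc k)"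

lemma star_starn: "star step s t s' \<Longrightarrow> \<exists>k. starn step s t s' k"
  by (induction rule: star.induct) (auto intro: starn.intros)

lemma starn_star: "starn step s t s' k \<Longrightarrow> star step s t s'"
  by (induction rule: starn.induct) (auto intro: star.intros)

lemma starn_trans: "starn step s t s' k \<Longrightarrow> starn step s' u s'' j \<Longrightarrow> starn step s (t @ u) s'' (k + j)"
  by (induction rule: starn.induct) (auto intro: starn.intros)

lemma star_trans: "star step s t s' \<Longrightarrow> star step s' u s'' \<Longrightarrow> star step s (t @ u) s''"
  by (induction rule: star.induct) (auto intro: star.intros)

lemma forever_nil_div: "Forever step s (Fin []) n \<Longrightarrow> DivSilent step s"
proof (coinduction arbitrary: s n rule: DivSilent.coinduct)
  case (DivSilent s n)
  then show ?case
  proof (cases rule: Forever.cases)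
    case (1 t s' \<tau> m)
    from 1(1) obtain u where u: "\<tau> = Fin u" "t = []" "u = []"
      by (cases \<tau>) auto
    show ?thesis using 1 u by auto
  qed
qed

lemma forever_fin_aux:
  fixes step :: "'s \<Rightarrow> 'e list \<Rightarrow> 's \<Rightarrow> bool"
  shows "\<forall>t s n. length t = L \<longrightarrow> Forever step s (Fin t) n \<longrightarrow> ForeverFinite step t s"
proof (induction L rule: less_induct)
  case (less L)
  note outer = less.IH
  show ?case
  proof (intro allI impI)
    fix t :: "'e list" and s :: 's and n :: nat assume len: "length t = L"
    show "Forever step s (Fin t) n \<Longrightarrow> ForeverFinite step t s"
    proof (induction n arbitrary: s rule: less_induct)
      case (less n s)
      from less.prems obtain t1 s1 \<tau> m where
        st: "step s t1 s1" and fo: "Forever step s1 \<tau> m" and g: "guard \<tau> n t1 m"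
        and eq: "Fin t = gconcat t1 \<tau>"
        by (cases rule: Forever.cases) auto
      from eq obtain u where u: "\<tau> = Fin u" "t = t1 @ u" by (cases \<tau>) auto
      show ?case
      proof (cases "u = []")
        case True
        then have "DivSilent step s1" using fo u forever_nil_div[of step s1 m] by simp
        then show ?thesis using st u True unfolding ForeverFinite_def
          by (metis append_Nil2 star.intros)
      next
        case False
        show ?thesis
        proof (cases "t1 = []")
          case True
          then have "m < n" using g u False unfolding guard_def by auto
          then have "ForeverFinite step t s1" using less.IH fo u True by auto
          then show ?thesis using st True unfolding ForeverFinite_def
            by (metis append_Nil star.intros)
        next
          case f2: False
          then have "length u < L" using len u by auto
          then have "ForeverFinite step u s1" using outer[rule_format, of "length u" u s1 m] fo u by blast
          then show ?thesis using st u unfolding ForeverFinite_def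
            by (metis star.intros)
        qed
      qed
    qed
  qed
qed

lemma forever_inf_step:
  "Forever step s (Inf \<omega>) n \<Longrightarrow> \<exists>t s' \<omega>' m. star step s t s' \<and> t \<noteq> [] \<and> \<omega> = t @- \<omega>' \<and> Forever step s' (Inf \<omega>') m"
proof (induction n arbitrary: s \<omega> rule: less_induct)
  case (less n s \<omega>)
  from less.prems obtain t1 s1 \<tau> m where
    st: "step s t1 s1" and fo: "Forever step s1 \<tau> m" and g: "guard \<tau> n t1 m"
    and eq: "Inf \<omega> = gconcat t1 \<tau>"
    by (cases rule: Forever.cases) auto
  from eq obtain w where w: "\<tau> = Inf w" "\<omega> = t1 @- w" by (cases \<tau>) auto
  show ?case
  proof (cases "t1 = []")
    case True
    then have "m < n" using g w unfolding guard_def by auto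
    then obtain t s' \<omega>' m' where h: "star step s1 t s'" "t \<noteq> []" "w = t @- \<omega>'" "Forever step s' (Inf \<omega>') m'"
      using less.IH fo w by blast
    have "star step s ([] @ t) s'" using star_step[of step s "[]" s1 t s'] st True h(1) by simp
    then have "star step s t s'" by simp
    then show ?thesis using h True w by auto
  next
    case False
    have "star step s (t1 @ []) s1" using star_step[OF st star_refl[of step s1]] .
    then have "star step s t1 s1" by simp
    then show ?thesis using False fo w by blast
  qed
qed

lemma forever_inf: "Forever step s (Inf \<omega>) n \<Longrightarrow> Reacts step \<omega> s"
proof (coinduction arbitrary: s \<omega> n rule: Reacts.coinduct)
  case (Reacts s \<omega> n)
  then show ?case using forever_inf_step by fastforce
qed

lemma div_forever: "DivSilent step s \<Longrightarrow> Forever step s (Fin []) 0"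
proof (coinduction arbitrary: s rule: Forever.coinduct)
  case (Forever s)
  then show ?case
  proof (cases rule: DivSilent.cases)
    case (1 s')
    have g: "guard (Fin []) 0 [] 0" by (simp add: guard_def)
    have e: "Fin [] = gconcat [] (Fin [])" by simp
    show ?thesis using 1 g e by blast
  qed
qed

lemma star_forever_fin: "star step s t s' \<Longrightarrow> DivSilent step s' \<Longrightarrow> \<exists>n. Forever step s (Fin t) n"
proof (induction rule: star.induct)
  case (star_refl s)
  then show ?case using div_forever[of step s] by blast
next
  case (star_step s t1 s1 t2 s')
  then obtain m where m: "Forever step s1 (Fin t2) m" by blast
  have "Forever step s (gconcat t1 (Fin t2)) (Suc m)"
    by (rule Forever.intros[OF star_step.hyps(1) m]) (simp add: guard_def)
  then show ?case by auto
qed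

lemma reacts_forever_aux:
  assumes "starn step s t s' k" "t \<noteq> []" "Reacts step \<omega>' s'"
  shows "Forever step s (Inf (t @- \<omega>')) k"
  using assms
proof (coinduction arbitrary: s t s' k \<omega>' rule: Forever.coinduct)
  case (Forever s t s' k \<omega>')
  from Forever(1,2) obtain t1 s1 t2 j where
    k: "k = Suc j" and st: "step s t1 s1" and sn: "starn step s1 t2 s' j" and t: "t = t1 @ t2"
    by (cases rule: starn.cases) auto
  show ?case
  proof (cases "t2 = []")
    case False
    have e: "Inf (t @- \<omega>') = gconcat t1 (Inf (t2 @- \<omega>'))" by (simp add: t)
    have g: "guard (Inf (t2 @- \<omega>')) k t1 j" by (simp add: guard_def k)
    show ?thesis
      apply (rule exI[of _ s], rule exI[of _ t1], rule exI[of _ s1], rule exI[of _ "Inf (t2 @- \<omega>')"], rule exI[of _ j], rule exI[of _ k])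
      apply (rule conjI[OF refl], rule conjI[OF e], rule conjI[OF refl], rule conjI[OF st], rule conjI[OF disjI1], rule_tac [2] g)
      apply (rule exI[of _ s1], rule exI[of _ t2], rule exI[of _ s'], rule exI[of _ j], rule exI[of _ "\<omega>'"])
      using sn False Forever(3) by simp
  next
    case True
    then have t1: "t1 \<noteq> []" using t Forever(2) by auto
    from Forever(3) obtain u s'' \<omega>'' where
      r: "star step s' u s''" "u \<noteq> []" "Reacts step \<omega>'' s''" "\<omega>' = u @- \<omega>''"
      by (cases rule: Reacts.cases) auto
    from r(1) obtain i where i: "starn step s' u s'' i" using star_starn[OF r(1)] by blast
    have "starn step s1 (t2 @ u) s'' (j + i)" using starn_trans[OF sn i] .
    then have sn2: "starn step s1 u s'' (j + i)" using True by simp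
    have e: "Inf (t @- \<omega>') = gconcat t1 (Inf (u @- \<omega>''))" by (simp add: t True r(4))
    have g: "guard (Inf (u @- \<omega>'')) k t1 (j + i)" by (simp add: guard_def t1)
    show ?thesis
      apply (rule exI[of _ s], rule exI[of _ t1], rule exI[of _ s1], rule exI[of _ "Inf (u @- \<omega>'')"], rule exI[of _ "j + i"], rule exI[of _ k])
      apply (rule conjI[OF refl], rule conjI[OF e], rule conjI[OF refl], rule conjI[OF st], rule conjI[OF disjI1], rule_tac [2] g)
      apply (rule exI[of _ s1], rule exI[of _ u], rule exI[of _ s''], rule exI[of _ "j + i"], rule exI[of _ "\<omega>''"])
      using sn2 r(2,3) by simp
  qed
qed

lemma reacts_forever: "Reacts step \<omega> s \<Longrightarrow> \<exists>n. Forever step s (Inf \<omega>) n"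
proof -
  assume "Reacts step \<omega> s"
  then obtain t s' \<omega>' where r: "star step s t s'" "t \<noteq> []" "Reacts step \<omega>' s'" "\<omega> = t @- \<omega>'"
    by (cases rule: Reacts.cases) auto
  from star_starn[OF r(1)] obtain k where k: "starn step s t s' k" by (elim exE)
  have "Forever step s (Inf (t @- \<omega>')) k" by (rule reacts_forever_aux[OF k r(2) r(3)])
  then show ?thesis unfolding r(4) by (rule exI)
qed

theorem mainTheorem1:
  fixes step :: "'s \<Rightarrow> 'e list \<Rightarrow> 's \<Rightarrow> bool" and s :: 's
  shows "(\<forall>\<tau> n. Forever step s \<tau> n \<longrightarrow>
            (\<forall>t. \<tau> = Fin t \<longrightarrow> ForeverFinite step t s) \<and>
            (\<forall>\<omega>. \<tau> = Inf \<omega> \<longrightarrow> Reacts step \<omega> s))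
       \<and> (determinate step \<longrightarrow>
            (\<forall>t. ForeverFinite step t s \<longrightarrow> (\<exists>n. Forever step s (Fin t) n)) \<and>
            (\<forall>\<omega>. Reacts step \<omega> s \<longrightarrow> (\<exists>n. Forever step s (Inf \<omega>) n)))"
proof (intro conjI allI impI)
  fix \<tau> n t assume "Forever step s \<tau> n" "\<tau> = Fin t"
  then show "ForeverFinite step t s" using forever_fin_aux[of "length t" step] by blast
next
  fix \<tau> n \<omega> assume "Forever step s \<tau> n" "\<tau> = Inf \<omega>"
  then show "Reacts step \<omega> s" using forever_inf[of step s \<omega> n] by simp
next
  fix t assume "ForeverFinite step t s"
  then show "\<exists>n. Forever step s (Fin t) n"
    unfolding ForeverFinite_def using star_forever_fin[of step s t] by blast
next
  fix \<omega> assume "Reacts step \<omega> s"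
  then show "\<exists>n. Forever step s (Inf \<omega>) n" using reacts_forever[of step \<omega> s] by blast
qed

end
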